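(* For integers $m\neq 0$ and $n$, define \[ \mathcal{I}_1^{(m,n)}=\frac{1}{|m|}\sup_{0\le s\le |m|}\int_0^s K_{n+1}(s)I_n(t)\,t\,dt,\qquad \mathcal{I}_2^{(m,n)}=\frac{1}{|m|}\sup_{0\le t\le |m|}\int_t^{|m|} K_{n+1}(s)I_n(t)\,s\,ds. \] Then there is a constant $C$, independent of $m$ and $n$, such that for $i=1,2$ and all integers $m\neq 0$, $n$, \[ \mathcal{I}_i^{(m,n)}\le\frac{C}{\sqrt{1+m^2+n^2}}. \]
   Context: $I_n,K_n$ are the modified Bessel functions of the first and second kind of integer order $n$: $I_n(t)=\frac1\pi\int_0^\pi e^{t\cos\alpha}\cos(n\alpha)\,d\alpha$, $K_n(t)=\int_0^\infty e^{-t\cosh\alpha}\cosh(n\alpha)\,d\alpha$ for $t>0$. *)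

theory Defs
  imports "HOL-Analysis.Analysis"
begin

definition besselI :: "int \<Rightarrow> real \<Rightarrow> real" where
  "besselI n t = (1 / pi) * integral {0..pi} (\<lambda>\<alpha>. exp (t * cos \<alpha>) * cos (real_of_int n * \<alpha>))"

text \<open>Meant for t > 0.\<close>
definition besselK :: "int \<Rightarrow> real \<Rightarrow> real" where
  "besselK n t = integral {0..} (\<lambda>\<alpha>. exp (- t * cosh \<alpha>) * cosh (real_of_int n * \<alpha>))"

definition calI1 :: "int \<Rightarrow> int \<Rightarrow> real" where
  "calI1 m n = (1 / \<bar>real_of_int m\<bar>) *
     (SUP s\<in>{0..\<bar>real_of_int m\<bar>}.
        integral {0..s} (\<lambda>t. besselK (n + 1) s * besselI n t * t))"

definition calI2 :: "int \<Rightarrow> int \<Rightarrow> real" where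
  "calI2 m n = (1 / \<bar>real_of_int m\<bar>) *
     (SUP t\<in>{0..\<bar>real_of_int m\<bar>}.
        integral {t..\<bar>real_of_int m\<bar>} (\<lambda>s. besselK (n + 1) s * besselI n t * s))"

end

theory Submission
  imports Defs "HOL-Complex_Analysis.Complex_Analysis"
begin


lemma cos_lower_aux: fixes x::real assumes "x \<ge> 0" shows "cos x \<ge> 1 - x^2/2"
proof -
  let ?f = "\<lambda>x. cos x - 1 + x^2/2"
  have "?f 0 \<le> ?f x"
  proof (rule DERIV_nonneg_imp_nondecreasing[OF assms])
    fix u assume "0 \<le> u" "u \<le> x"
    show "\<exists>y. DERIV ?f u :> y \<and> y \<ge> 0"
      using sin_x_le_x[OF \<open>0 \<le> u\<close>]
      by (intro exI[of _ "- sin u + u"]) (auto intro!: derivative_eq_intros)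
  qed
  then show ?thesis by simp
qed

lemma sin_lower_aux: fixes x::real assumes "x \<ge> 0" shows "sin x \<ge> x - x^3/6"
proof -
  let ?f = "\<lambda>x. sin x - x + x^3/6"
  have "?f 0 \<le> ?f x"
  proof (rule DERIV_nonneg_imp_nondecreasing[OF assms])
    fix u assume "0 \<le> u" "u \<le> x"
    show "\<exists>y. DERIV ?f u :> y \<and> y \<ge> 0"
      using cos_lower_aux[OF \<open>0 \<le> u\<close>]
      by (intro exI[of _ "cos u - 1 + u^2/2"]) (auto intro!: derivative_eq_intros simp: power2_eq_square power3_eq_cube)
  qed
  then show ?thesis by simp
qed

lemma one_plus_cos_lower: fixes x::real assumes "0 \<le> x" "x \<le> 1"
  shows "1 + cos (2*pi*x) \<ge> 2 * (x - 1/2)^2"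
proof -
  define y where "y = pi * \<bar>x - 1/2\<bar>"
  have y0: "y \<ge> 0" unfolding y_def by simp
  have "\<bar>x - 1/2\<bar> \<le> 1/2" using assms by linarith
  hence "y \<le> pi * (1/2)" unfolding y_def by (intro mult_left_mono) auto
  hence ypi: "y \<le> 2" using pi_less_4 by linarith
  have y2: "y^2 \<le> 2^2" using ypi y0 by (intro power_mono) auto
  have "y^3 = y * y^2" by (simp add: power3_eq_cube power2_eq_square)
  also have "\<dots> \<le> y * 4" using y2 y0 by (intro mult_left_mono) auto
  finally have "y^3/6 \<le> 2*y/3" by simp
  hence sy: "sin y \<ge> y/3" using sin_lower_aux[OF y0] by simp
  have sq: "(sin y)^2 \<ge> (y/3)^2" using sy y0 by (intro power_mono) auto
  have "cos (2*y) = cos (2*pi*(x - 1/2))"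
  proof (cases "x \<ge> 1/2")
    case True thus ?thesis unfolding y_def by (simp add: algebra_simps)
  next
    case False
    hence "2*y = - (2*pi*(x - 1/2))" unfolding y_def by (simp add: algebra_simps)
    thus ?thesis by (simp only: cos_minus)
  qed
  also have "\<dots> = cos (2*pi*x - pi)" by (simp add: algebra_simps)
  also have "\<dots> = - cos (2*pi*x)" by (simp add: cos_diff)
  finally have "cos (2*pi*x) = - cos (2*y)" by simp
  hence "1 + cos (2*pi*x) = 2 * (sin y)^2" by (simp add: cos_double_sin)
  also have "\<dots> \<ge> 2 * (y/3)^2" using sq by simp
  finally have A: "1 + cos (2*pi*x) \<ge> 2 * (y/3)^2" .
  have "(y/3)^2 = (pi/3)^2 * (x - 1/2)^2" unfolding y_def by (simp add: power_mult_distrib power_divide)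
  moreover have "(pi/3)^2 \<ge> 1^2" using pi_gt3 by (intro power_mono) auto
  ultimately have "(y/3)^2 \<ge> (x - 1/2)^2" by (simp add: mult_le_cancel_right1)
  with A show ?thesis by linarith
qed

lemma exp_neg_pade: fixes x::real assumes "x \<ge> 0" shows "exp (-x) \<ge> (2-x)/(2+x)"
proof -
  let ?f = "\<lambda>x. (2+x) * exp (-x) - 2 + x"
  have "?f 0 \<le> ?f x"
  proof (rule DERIV_nonneg_imp_nondecreasing[OF assms])
    fix u assume u: "0 \<le> u" "u \<le> x"
    have "exp u \<ge> 1 + u" by (rule exp_ge_add_one_self)
    hence "(1+u) * exp (-u) \<le> 1"
      by (metis exp_minus_inverse mult.commute mult_right_mono exp_ge_zero)
    thus "\<exists>y. DERIV ?f u :> y \<and> y \<ge> 0"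
      by (intro exI[of _ "1 - (1+u) * exp (-u)"]) (auto intro!: derivative_eq_intros simp: algebra_simps)
  qed
  then have "(2+x) * exp (-x) \<ge> 2 - x" by simp
  thus ?thesis using assms by (simp add: divide_le_eq mult.commute)
qed

lemma f_lower: fixes x::real assumes "x \<ge> 0" shows "exp (-x) - 1 + x \<ge> x^2/(2+x)"
proof -
  have "(2-x)/(2+x) - 1 + x = x^2/(2+x)" using assms by (simp add: field_simps power2_eq_square)
  thus ?thesis using exp_neg_pade[OF assms] by linarith
qed

lemma q_lin: fixes x k::real assumes "x \<ge> 0" "k \<ge> 1"
  shows "(k^2/2) * (x^2/(2+x)) \<ge> k*x/4 - 1/8"
proof (cases "x \<le> 2")
  case True
  have "x^2/(2+x) \<ge> x^2/4" using assms True by (intro divide_left_mono) auto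
  hence "(k^2/2) * (x^2/(2+x)) \<ge> (k^2/2) * (x^2/4)" by (intro mult_left_mono) auto
  moreover have "(k^2/2) * (x^2/4) \<ge> k*x/4 - 1/8"
    using sum_squares_ge_zero[of "k*x - 1" 0] by (simp add: power2_eq_square algebra_simps)
  ultimately show ?thesis by linarith
next
  case False
  have "x^2/(2+x) \<ge> x/2" using False by (simp add: field_simps power2_eq_square)
  hence "(k^2/2) * (x^2/(2+x)) \<ge> (k^2/2) * (x/2)" by (intro mult_left_mono) auto
  moreover have "k^2 \<ge> k" using assms by (simp add: power2_eq_square)
  hence "k*x \<le> k^2 * x" using assms by (intro mult_right_mono) auto
  hence "(k^2/2) * (x/2) \<ge> k*x/4" by simp
  ultimately show ?thesis by linarith
qed



lemma sech_has_integral: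
  fixes C k b :: real assumes "k > 0" "C \<ge> 0"
  shows "((\<lambda>a. C * (2 / (exp (k*(a-b)) + exp (-(k*(a-b)))))) has_integral
           C * (2/k) * (pi/2 - arctan (exp (k*(0-b))))) {0..}"
proof -
  define F where "F = (\<lambda>a::real. C * (2/k) * arctan (exp (k*(a-b))))"
  have deriv: "(F has_real_derivative C * (2 / (exp (k*(a-b)) + exp (-(k*(a-b)))))) (at a)" for a
  proof -
    have "(F has_real_derivative C * (2/k) * (k * exp (k*(a-b)) / (1 + (exp (k*(a-b)))^2))) (at a)"
      unfolding F_def by (auto intro!: derivative_eq_intros) (simp add: divide_inverse ac_simps)
    moreover have "C * (2/k) * (k * exp (k*(a-b)) / (1 + (exp (k*(a-b)))^2))
          = C * (2 / (exp (k*(a-b)) + exp (-(k*(a-b)))))"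
    proof -
      define u where "u = exp (k*(a-b))"
      have u0: "u > 0" unfolding u_def by simp
      have "exp (-(k*(a-b))) = 1/u" unfolding u_def by (simp add: exp_minus inverse_eq_divide)
      moreover have "C*(2/k)*(k*u/(1+u^2)) = C*(2/(u+1/u))" using u0 assms by (simp add: field_simps power2_eq_square)
      ultimately show ?thesis unfolding u_def by simp
    qed
    ultimately show ?thesis by simp
  qed
  show ?thesis
  proof (rule has_integral_to_inf)
    show "(\<lambda>a. C * (2 / (exp (k*(a-b)) + exp (-(k*(a-b)))))) integrable_on {0..y}" for y
      by (intro integrable_continuous_interval continuous_intros) (metis add_pos_pos exp_gt_zero less_irrefl)
    have "eventually (\<lambda>y. integral {0..y} (\<lambda>a. C * (2 / (exp (k*(a-b)) + exp (-(k*(a-b)))))) = F y - F 0) at_top"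
    proof (rule eventually_at_top_linorderI[of 0])
      fix y :: real assume "y \<ge> 0"
      thus "integral {0..y} (\<lambda>a. C * (2 / (exp (k*(a-b)) + exp (-(k*(a-b)))))) = F y - F 0"
        using deriv by (intro integral_unique fundamental_theorem_of_calculus)
          (auto simp: has_real_derivative_iff_has_vector_derivative[symmetric] intro: has_field_derivative_at_within)
    qed
    moreover have "((\<lambda>y. F y - F 0) \<longlongrightarrow> C * (2/k) * (pi/2 - arctan (exp (k*(0-b))))) at_top"
    proof -
      have "filterlim (\<lambda>y. exp (k*(y-b))) at_top at_top"
        using assms by real_asymp
      hence "((\<lambda>y. arctan (exp (k*(y-b)))) \<longlongrightarrow> pi/2) at_top"
        using tendsto_arctan_at_top filterlim_compose by blast
      hence "((\<lambda>y. C * (2/k) * arctan (exp (k*(y-b))) - F 0) \<longlongrightarrow> C * (2/k) * (pi/2) - F 0) at_top"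
        by (intro tendsto_intros)
      thus ?thesis unfolding F_def by (simp add: algebra_simps)
    qed
    ultimately show "((\<lambda>y. integral {0..y} (\<lambda>a. C * (2 / (exp (k*(a-b)) + exp (-(k*(a-b))))))) \<longlongrightarrow> C * (2/k) * (pi/2 - arctan (exp (k*(0-b))))) at_top"
      using tendsto_cong by (smt (verit, ccfv_threshold) eventually_mono filterlim_cong)
  next
    show "0 \<le> C * (2 / (exp (k*(y-b)) + exp (-(k*(y-b)))))" if "y \<ge> 0" for y
      using assms by (auto intro!: mult_nonneg_nonneg divide_nonneg_pos add_pos_pos)
  qed
qed



lemma integral_le_has:
  fixes f g :: "real \<Rightarrow> real"
  assumes "(g has_integral G) S" "\<And>x. x \<in> S \<Longrightarrow> f x \<le> g x" "G \<ge> 0"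
  shows "integral S f \<le> G"
proof (cases "f integrable_on S")
  case True
  have "integral S f \<le> integral S g"
    using True assms by (intro integral_le) auto
  thus ?thesis using assms(1) by (simp add: integral_unique)
next
  case False thus ?thesis using assms by (simp add: not_integrable_integral)
qed

lemma exponent_bound:
  fixes s \<nu> a :: real
  assumes s: "s > 0" and nu: "\<nu> \<ge> 1"
  defines "R \<equiv> sqrt (s^2 + \<nu>^2)"
  defines "b \<equiv> ln ((\<nu> + R) / s)"
  shows "- s * cosh a + \<nu> * a \<le> - R + \<nu> * b + 1/8 - sqrt R / 4 * \<bar>a - b\<bar>"
proof -
  have R2: "R^2 = s^2 + \<nu>^2" unfolding R_def by simp
  have R0: "R \<ge> 0" unfolding R_def by simp
  have Rnu: "R \<ge> \<nu>" unfolding R_def by (rule real_le_rsqrt) simp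
  have R1: "R \<ge> 1" using Rnu nu by simp
  define E where "E = (\<nu> + R) / s"
  have E0: "E > 0" unfolding E_def using s nu R0 by simp
  have expb: "exp b = E" unfolding b_def E_def[symmetric] using E0 by simp
  have sE: "s * E = \<nu> + R" unfolding E_def using s by simp
  have sE': "s / E = R - \<nu>"
  proof -
    have "(R - \<nu>) * (\<nu> + R) = s^2" using R2 by (simp add: algebra_simps power2_eq_square)
    thus ?thesis unfolding E_def using s nu R0 by (simp add: field_simps power2_eq_square)
  qed
  define d where "d = a - b"
  have "exp a = exp b * exp d" unfolding d_def by (simp add: exp_add[symmetric])
  hence ea: "exp a = E * exp d" using expb by simp
  have "exp (-a) = exp (-d) * exp (-b)" unfolding d_def by (simp add: exp_add[symmetric])
  hence ema: "exp (-a) = exp (-d) / E" using expb by (simp add: exp_minus divide_inverse)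
  have scosh: "s * cosh a = ((\<nu> + R) * exp d + (R - \<nu>) * exp (-d)) / 2"
  proof -
    have "s * cosh a = ((s*E) * exp d + (s/E) * exp (-d)) / 2"
      unfolding cosh_field_def ea ema using E0 by (simp add: field_simps)
    thus ?thesis unfolding sE sE' .
  qed
  have key: "s * cosh a - \<nu> * a - (R - \<nu> * b)
        = ((R + \<nu>) * (exp d - 1 - d) + (R - \<nu>) * (exp (-d) - 1 + d)) / 2"
    using scosh unfolding d_def by (simp add: algebra_simps)
  have lb0: "(R + \<nu>) * (exp d - 1 - d) + (R - \<nu>) * (exp (-d) - 1 + d) \<ge> R * (\<bar>d\<bar>^2 / (2 + \<bar>d\<bar>))"
  proof (cases "d \<ge> 0")
    case True
    have "exp d - 1 - d \<ge> d^2/2" using exp_lower_Taylor_quadratic[OF True] by simp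
    moreover have "d^2/2 \<ge> d^2/(2+d)" using True by (intro divide_left_mono) auto
    ultimately have "exp d - 1 - d \<ge> d^2/(2+d)" by linarith
    hence "(R + \<nu>) * (exp d - 1 - d) \<ge> R * (d^2/(2+d))"
      using nu R0 True by (intro mult_mono) auto
    moreover have "(R - \<nu>) * (exp (-d) - 1 + d) \<ge> 0"
      using Rnu exp_ge_add_one_self[of "-d"] by simp
    ultimately show ?thesis using True by simp
  next
    case False
    define x where "x = -d"
    have x0: "x \<ge> 0" using False x_def by simp
    have "exp (-x) - 1 + x \<ge> x^2/(2+x)" by (rule f_lower[OF x0])
    hence "(R + \<nu>) * (exp d - 1 - d) \<ge> R * (x^2/(2+x))"
      unfolding x_def using nu R0 x0 x_def by (intro mult_mono) auto
    moreover have "(R - \<nu>) * (exp (-d) - 1 + d) \<ge> 0"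
      using Rnu exp_ge_add_one_self[of "-d"] by simp
    moreover have "\<bar>d\<bar> = x" using False x_def by simp
    ultimately show ?thesis by simp
  qed
  have gen: "\<And>X Y Z::real. Z = Y / 2 \<Longrightarrow> X \<le> Y \<Longrightarrow> X/2 \<le> Z" by linarith
  have "(R/2) * (\<bar>d\<bar>^2 / (2 + \<bar>d\<bar>)) = (R * (\<bar>d\<bar>^2 / (2 + \<bar>d\<bar>)))/2" by simp
  hence lb: "s * cosh a - \<nu> * a - (R - \<nu> * b) \<ge> (R/2) * (\<bar>d\<bar>^2 / (2 + \<bar>d\<bar>))"
    using gen[OF key lb0] by (simp add: mult.commute)
  have "(sqrt R ^2/2) * (\<bar>d\<bar>^2/(2+\<bar>d\<bar>)) \<ge> sqrt R * \<bar>d\<bar>/4 - 1/8"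
    using R1 by (intro q_lin) auto
  hence "(R/2) * (\<bar>d\<bar>^2/(2+\<bar>d\<bar>)) \<ge> sqrt R * \<bar>d\<bar>/4 - 1/8" using R0 by simp
  with lb show ?thesis unfolding d_def by (simp add: algebra_simps)
qed



lemma cosh_le_exp_abs: "cosh (x::real) \<le> exp \<bar>x\<bar>"
proof -
  have "exp x \<le> exp \<bar>x\<bar>" "exp (-x) \<le> exp \<bar>x\<bar>" by (rule exp_mono, linarith)+
  moreover have "\<And>A B C::real. (A::real) \<le> C \<Longrightarrow> (B::real) \<le> C \<Longrightarrow> (A+B)/2 \<le> C" by (auto simp: field_simps)
  ultimately show ?thesis unfolding cosh_field_def by blast
qed

lemma exp_neg_abs_le_sech: "exp (- \<bar>u::real\<bar>) \<le> 2 / (exp u + exp (-u))"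
proof -
  have "exp u \<le> exp \<bar>u\<bar>" "exp (-u) \<le> exp \<bar>u\<bar>" by (rule exp_mono, linarith)+
  moreover have "\<And>A B C::real. (A::real) \<le> C \<Longrightarrow> (B::real) \<le> C \<Longrightarrow> A+B \<le> 2*C" by (auto simp: field_simps)
  ultimately have "exp u + exp (-u) \<le> 2 * exp \<bar>u\<bar>" by blast
  moreover have "exp u + exp (-u) > 0" by (simp add: add_pos_pos)
  ultimately have "2 / (exp u + exp (-u)) \<ge> 2 / (2 * exp \<bar>u\<bar>)"
    by (intro divide_left_mono) auto
  moreover have "exp (- \<bar>u\<bar>) = 1 / exp \<bar>u\<bar>" by (simp add: exp_minus inverse_eq_divide)
  moreover have "2 / (2 * exp \<bar>u\<bar>) = 1 / exp \<bar>u\<bar>" by simp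
  ultimately show ?thesis by linarith
qed

lemma besselK_bound:
  fixes s \<nu> :: real and m :: int
  assumes s: "s > 0" and nu: "\<nu> \<ge> 1" and m: "\<bar>real_of_int m\<bar> \<le> \<nu>"
  defines "R \<equiv> sqrt (s^2 + \<nu>^2)"
  defines "b \<equiv> ln ((\<nu> + R) / s)"
  shows "besselK m s \<le> 4 * pi * exp (1/8) * exp (- R + \<nu> * b) / sqrt R"
proof -
  have Rnu: "R \<ge> \<nu>" unfolding R_def by (rule real_le_rsqrt) simp
  have R1: "R \<ge> 1" using Rnu nu by simp
  define k where "k = sqrt R / 4"
  have k0: "k > 0" unfolding k_def using R1 by simp
  define Cc where "Cc = exp (- R + \<nu> * b + 1/8)"
  have Cc0: "Cc \<ge> 0" unfolding Cc_def by simp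
  have pt: "exp (- s * cosh a) * cosh (real_of_int m * a) \<le> Cc * (2 / (exp (k*(a-b)) + exp (-(k*(a-b)))))"
    if a: "a \<in> {0..}" for a
  proof -
    have a0: "a \<ge> 0" using a by simp
    have "cosh (real_of_int m * a) \<le> exp \<bar>real_of_int m * a\<bar>" by (rule cosh_le_exp_abs)
    also have "\<bar>real_of_int m * a\<bar> = \<bar>real_of_int m\<bar> * a" using a0 by (simp add: abs_mult)
    also have "exp (\<bar>real_of_int m\<bar> * a) \<le> exp (\<nu> * a)" using m a0 by (simp add: mult_right_mono)
    finally have ch: "cosh (real_of_int m * a) \<le> exp (\<nu> * a)" .
    have "exp (- s * cosh a) * cosh (real_of_int m * a) \<le> exp (- s * cosh a) * exp (\<nu> * a)"
      using ch by (intro mult_left_mono) auto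
    also have "\<dots> = exp (- s * cosh a + \<nu> * a)" by (simp only: exp_add[symmetric])
    also have "\<dots> \<le> exp (- R + \<nu> * b + 1/8 - sqrt R / 4 * \<bar>a - b\<bar>)"
      using exponent_bound[OF s nu, of a] unfolding R_def b_def by simp
    also have "- R + \<nu> * b + 1/8 - sqrt R / 4 * \<bar>a - b\<bar> = (- R + \<nu> * b + 1/8) + (- \<bar>k*(a-b)\<bar>)"
      unfolding k_def using R1 by (simp add: abs_mult)
    also have "exp \<dots> = Cc * exp (- \<bar>k*(a-b)\<bar>)"
      unfolding Cc_def by (rule exp_add)
    also have "\<dots> \<le> Cc * (2 / (exp (k*(a-b)) + exp (-(k*(a-b)))))"
      using Cc0 by (intro mult_left_mono exp_neg_abs_le_sech) auto
    finally show ?thesis .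
  qed
  have G0: "Cc * (2/k) * (pi/2 - arctan (exp (k*(0-b)))) \<ge> 0"
    using Cc0 k0 arctan_ubound[of "exp (k*(0-b))"] by simp
  have "besselK m s \<le> Cc * (2/k) * (pi/2 - arctan (exp (k*(0-b))))"
    unfolding besselK_def
    by (rule integral_le_has[OF sech_has_integral[OF k0 Cc0] pt G0])
  also have "\<dots> \<le> Cc * (2/k) * (pi/2)"
  proof -
    have "arctan (exp (k*(0-b))) \<ge> 0"
      using arctan_less_iff[of 0 "exp (k*(0-b))"] by (simp add: less_imp_le)
    thus ?thesis using Cc0 k0 by (intro mult_left_mono) auto
  qed
  also have "\<dots> = 4 * pi * exp (1/8) * exp (- R + \<nu> * b) / sqrt R"
  proof -
    have "Cc = exp (- R + \<nu> * b) * exp (1/8)" unfolding Cc_def by (simp add: exp_add[symmetric])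
    moreover have "(2/k) * (pi/2) = 4 * pi / sqrt R" unfolding k_def by simp
    ultimately show ?thesis using R1 by (simp add: k_def field_simps)
  qed
  finally show ?thesis .
qed



definition gI :: "real \<Rightarrow> nat \<Rightarrow> complex \<Rightarrow> complex" where
  "gI t N w = exp (of_real t * cos w + \<i> * of_nat N * w)"

lemma gI_holo: "gI t N holomorphic_on S"
  unfolding gI_def by (intro holomorphic_intros)

lemma gI_cont: "continuous_on S (gI t N)"
  by (rule holomorphic_on_imp_continuous_on[OF gI_holo])

lemma gI_periodic: "gI t N (w + 2 * of_real pi) = gI t N w"
proof -
  have c: "cos (w + 2 * of_real pi) = cos w"
  proof -
    have "cos (2 * of_real pi :: complex) = 1" "sin (2 * of_real pi :: complex) = 0"
      using cos_of_real[of "2*pi"] sin_of_real[of "2*pi"] by simp_all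
    thus ?thesis by (simp add: cos_add)
  qed
  have e1: "exp ((2 * of_nat N * of_real pi) * \<i>) = (1::complex)"
  proof -
    have "(2 * of_nat N * of_real pi) * \<i> = of_nat N * (2 * of_real pi * \<i> :: complex)"
      by (simp add: algebra_simps)
    hence "exp ((2 * of_nat N * of_real pi) * \<i>) = exp (2 * of_real pi * \<i> :: complex) ^ N"
      by (simp only: exp_of_nat_mult)
    thus ?thesis by simp
  qed
  have "\<i> * of_nat N * (w + 2 * of_real pi) = \<i> * of_nat N * w + (2 * of_nat N * of_real pi) * \<i>"
    by (simp add: algebra_simps)
  hence "exp (\<i> * of_nat N * (w + 2 * of_real pi)) = exp (\<i> * of_nat N * w) * exp ((2 * of_nat N * of_real pi) * \<i>)"
    by (simp only: exp_add)
  hence e2: "exp (\<i> * of_nat N * (w + 2 * of_real pi)) = exp (\<i> * of_nat N * w)" unfolding e1 by simp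
  have "gI t N (w + 2 * of_real pi) = exp (of_real t * cos w) * exp (\<i> * of_nat N * (w + 2 * of_real pi))"
    unfolding gI_def c by (simp only: exp_add)
  also have "\<dots> = gI t N w" unfolding e2 gI_def by (simp only: exp_add)
  finally show ?thesis .
qed

lemma gI_real: "Re (gI t N (of_real x)) = exp (t * cos x) * cos (real N * x)"
proof -
  have "of_real t * cos (of_real x) + \<i> * of_nat N * of_real x = Complex (t * cos x) (real N * x)"
    by (simp add: cos_of_real complex_eq_iff)
  thus ?thesis unfolding gI_def by (simp add: Re_exp)
qed

lemma gI_norm_top: "norm (gI t N (of_real u + \<i> * of_real b)) = exp (t * cos u * ((exp b + exp (-b))/2) - real N * b)"
proof -
  have "Re (of_real t * cos (of_real u + \<i> * of_real b) + \<i> * of_nat N * (of_real u + \<i> * of_real b))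
        = t * cos u * ((exp b + exp (-b))/2) - real N * b"
    by (simp add: Re_cos)
  thus ?thesis unfolding gI_def by (simp add: norm_exp_eq_Re)
qed

lemma gI_lp_has: "(gI t N has_contour_integral contour_integral (linepath a b) (gI t N)) (linepath a b)"
  by (intro has_contour_integral_integral contour_integrable_continuous_linepath gI_cont)

lemma rect_zero:
  fixes b :: real
  defines "p1 \<equiv> - complex_of_real pi" and "p2 \<equiv> complex_of_real pi"
      and "p3 \<equiv> complex_of_real pi + \<i> * of_real b" and "p4 \<equiv> - complex_of_real pi + \<i> * of_real b"
  shows "contour_integral (linepath p1 p2) (gI t N) + contour_integral (linepath p3 p4) (gI t N) = 0"
proof -
  let ?g = "gI t N"
  let ?P = "linepath p1 p2 +++ (linepath p2 p3 +++ (linepath p3 p4 +++ linepath p4 p1))"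
  have vp: "valid_path ?P" by (auto intro!: valid_path_join)
  have "(?g has_contour_integral (contour_integral (linepath p1 p2) ?g + (contour_integral (linepath p2 p3) ?g
      + (contour_integral (linepath p3 p4) ?g + contour_integral (linepath p4 p1) ?g)))) ?P"
    by (intro has_contour_integral_join gI_lp_has valid_path_join) auto
  moreover have "(?g has_contour_integral 0) ?P"
    by (rule Cauchy_theorem_convex_simple[OF gI_holo convex_UNIV vp]) auto
  ultimately have sum0: "contour_integral (linepath p1 p2) ?g + (contour_integral (linepath p2 p3) ?g
      + (contour_integral (linepath p3 p4) ?g + contour_integral (linepath p4 p1) ?g)) = 0"
    using has_contour_integral_unique by blast
  have c4: "contour_integral (linepath p4 p1) ?g = - contour_integral (linepath p1 p4) ?g"
    using contour_integral_reversepath[of "linepath p1 p4" ?g] by simp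
  have c2: "contour_integral (linepath p2 p3) ?g = contour_integral (linepath p1 p4) ?g"
  proof -
    have "linepath p2 p3 x = linepath p1 p4 x + 2 * of_real pi" for x
      unfolding linepath_def p1_def p2_def p3_def p4_def by (simp add: algebra_simps scaleR_conv_of_real)
    hence "?g (linepath p2 p3 x) = ?g (linepath p1 p4 x)" for x by (simp add: gI_periodic)
    moreover have "p3 - p2 = p4 - p1" unfolding p1_def p2_def p3_def p4_def by simp
    ultimately show ?thesis unfolding contour_integral_integral by simp
  qed
  show ?thesis using sum0 c2 c4 by (simp add: algebra_simps)
qed

lemma even_integral:
  fixes F :: "real \<Rightarrow> real"
  assumes "continuous_on {-pi..pi} F" "\<And>x. F (-x) = F x"
  shows "integral {-pi..pi} F = 2 * integral {0..pi} F"
proof -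
  have "integral {-pi..0} F + integral {0..pi} F = integral {-pi..pi} F"
    by (rule Henstock_Kurzweil_Integration.integral_combine) (use assms(1) in \<open>auto intro: integrable_continuous_interval\<close>)
  moreover have "integral {-pi..-0} (\<lambda>x. F (-x)) = integral {0..pi} F"
    by (rule Henstock_Kurzweil_Integration.integral_reflect_real)
  hence "integral {-pi..0} F = integral {0..pi} F" using assms(2) by simp
  ultimately show ?thesis by simp
qed

lemma besselI_bound:
  fixes t b :: real and n :: int
  shows "\<bar>besselI n t\<bar> \<le> exp (- real (nat \<bar>n\<bar>) * b) *
           integral {0..1} (\<lambda>x. exp (- (t * ((exp b + exp (-b))/2)) * cos (2*pi*x)))"
proof -
  define N where "N = nat \<bar>n\<bar>"
  define ch where "ch = (exp b + exp (-b))/2"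
  let ?g = "gI t N"
  define p1 where "p1 = - complex_of_real pi"
  define p2 where "p2 = complex_of_real pi"
  define p3 where "p3 = complex_of_real pi + \<i> * of_real b"
  define p4 where "p4 = - complex_of_real pi + \<i> * of_real b"
  define F where "F = (\<lambda>x. exp (t * cos x) * cos (real N * x))"
  have rz: "contour_integral (linepath p1 p2) ?g + contour_integral (linepath p3 p4) ?g = 0"
    unfolding p1_def p2_def p3_def p4_def by (rule rect_zero)
  have c1: "contour_integral (linepath p1 p2) ?g = integral {-pi..pi} (\<lambda>x. ?g (of_real x))"
    using contour_integral_linepath_Reals_eq[of p1 p2 ?g] unfolding p1_def p2_def by simp
  have contg: "continuous_on S (\<lambda>x. ?g (of_real x))" for S
    by (intro continuous_on_compose2[OF gI_cont[of UNIV t N]] continuous_intros) auto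
  have "Re (integral {-pi..pi} (\<lambda>x. ?g (of_real x))) = integral {-pi..pi} (Re \<circ> (\<lambda>x. ?g (of_real x)))"
    by (rule integral_linear[symmetric]) (auto intro: integrable_continuous_interval contg bounded_linear_Re)
  also have "\<dots> = integral {-pi..pi} F" unfolding F_def o_def gI_real ..
  also have "\<dots> = 2 * integral {0..pi} F"
    by (rule even_integral) (auto simp: F_def intro!: continuous_intros)
  finally have reint: "Re (contour_integral (linepath p1 p2) ?g) = 2 * integral {0..pi} F" unfolding c1 .
  have cosn: "cos (real_of_int n * a) = cos (real N * a)" for a
  proof -
    have "real N = \<bar>real_of_int n\<bar>" unfolding N_def by simp
    thus ?thesis by (cases "n \<ge> 0") simp_all
  qed
  have bI: "besselI n t = (1/pi) * integral {0..pi} F"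
    unfolding besselI_def F_def cosn ..
  have "\<bar>besselI n t\<bar> = \<bar>Re (contour_integral (linepath p3 p4) ?g)\<bar> / (2*pi)"
  proof -
    have "Re (contour_integral (linepath p3 p4) ?g) = - Re (contour_integral (linepath p1 p2) ?g)"
      using arg_cong[OF rz, of Re] by simp
    thus ?thesis unfolding bI using reint by (simp add: abs_mult)
  qed
  also have "\<dots> \<le> cmod (contour_integral (linepath p3 p4) ?g) / (2*pi)"
    by (intro divide_right_mono abs_Re_le_cmod) auto
  also have "cmod (contour_integral (linepath p3 p4) ?g) \<le>
      integral {0..1} (\<lambda>x. 2 * pi * (exp (- real N * b) * exp (- (t * ch) * cos (2*pi*x))))"
  proof -
    have hi: "((\<lambda>x. ?g (linepath p3 p4 x) * (p4 - p3)) has_integral contour_integral (linepath p3 p4) ?g) {0..1}"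
      using gI_lp_has[of t N p3 p4] by (simp add: has_contour_integral_linepath)
    have lp: "linepath p3 p4 x = of_real (pi - 2*pi*x) + \<i> * of_real b" for x
      unfolding linepath_def p3_def p4_def by (simp add: algebra_simps scaleR_conv_of_real)
    have nrm: "norm (?g (linepath p3 p4 x) * (p4 - p3)) = 2 * pi * (exp (- real N * b) * exp (- (t * ch) * cos (2*pi*x)))" for x
    proof -
      have "norm (p4 - p3) = 2 * pi" unfolding p3_def p4_def by simp
      moreover have "cos (pi - 2*pi*x) = - cos (2*pi*x)" by (simp add: cos_diff)
      hence "t * cos (pi - 2*pi*x) * ch - real N * b = (- real N * b) + (- (t*ch) * cos (2*pi*x))"
        by (simp add: algebra_simps)
      hence "exp (t * cos (pi - 2*pi*x) * ch - real N * b) = exp (- real N * b) * exp (- (t * ch) * cos (2*pi*x))"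
        by (simp only: exp_add)
      ultimately show ?thesis unfolding lp gI_norm_top ch_def[symmetric] norm_mult by simp
    qed
    have "norm (integral {0..1} (\<lambda>x. ?g (linepath p3 p4 x) * (p4 - p3))) \<le>
        integral {0..1} (\<lambda>x. 2 * pi * (exp (- real N * b) * exp (- (t * ch) * cos (2*pi*x))))"
      apply (rule integral_norm_bound_integral)
        apply (rule has_integral_integrable[OF hi])
       apply (intro integrable_continuous_interval continuous_intros)
      apply (simp only: nrm order.refl)
      done
    thus ?thesis unfolding integral_unique[OF hi] .
  qed
  hence "cmod (contour_integral (linepath p3 p4) ?g) / (2*pi) \<le>
      integral {0..1} (\<lambda>x. 2 * pi * (exp (- real N * b) * exp (- (t * ch) * cos (2*pi*x)))) / (2*pi)"
    by (intro divide_right_mono) auto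
  also have "\<dots> = exp (- real N * b) * integral {0..1} (\<lambda>x. exp (- (t * ch) * cos (2*pi*x)))"
    by simp
  finally show ?thesis unfolding N_def ch_def .
qed



lemma arctan_has_integral:
  fixes k :: real assumes k: "k > 0"
  shows "((\<lambda>x. 1 / (1 + k * (x - 1/2)^2)) has_integral (2 * arctan (sqrt k / 2) / sqrt k)) {0..1}"
proof -
  define F where "F = (\<lambda>x::real. arctan (sqrt k * (x - 1/2)) / sqrt k)"
  have d: "(F has_real_derivative 1 / (1 + k * (x - 1/2)^2)) (at x)" for x
  proof -
    have "((\<lambda>x. sqrt k * (x - 1/2)) has_real_derivative sqrt k * (1 - 0)) (at x)"
      by (intro DERIV_cmult DERIV_diff DERIV_ident DERIV_const)
    hence "((\<lambda>x. arctan (sqrt k * (x - 1/2))) has_real_derivative inverse (1 + (sqrt k * (x - 1/2))^2) * (sqrt k * (1 - 0))) (at x)"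
      by (rule DERIV_chain2[OF DERIV_arctan])
    hence "(F has_real_derivative inverse (1 + (sqrt k * (x - 1/2))^2) * (sqrt k * (1 - 0)) / sqrt k) (at x)"
      unfolding F_def by (rule DERIV_cdivide)
    moreover have "inverse (1 + (sqrt k * (x - 1/2))^2) * (sqrt k * (1 - 0)) / sqrt k = 1 / (1 + k * (x - 1/2)^2)"
    proof -
      have "(sqrt k * (x - 1/2))^2 = k * (x - 1/2)^2" using k by (simp add: power_mult_distrib)
      thus ?thesis using k by (simp add: inverse_eq_divide)
    qed
    ultimately show ?thesis by simp
  qed
  have "((\<lambda>x. 1 / (1 + k * (x - 1/2)^2)) has_integral (F 1 - F 0)) {0..1}"
    using d by (intro fundamental_theorem_of_calculus)
      (auto simp: has_real_derivative_iff_has_vector_derivative[symmetric] intro: has_field_derivative_at_within)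
  moreover have "F 1 - F 0 = 2 * arctan (sqrt k / 2) / sqrt k"
  proof -
    have "sqrt k * (1 - 1/2) = sqrt k / 2" "sqrt k * (0 - 1/2) = - (sqrt k / 2)" by simp_all
    hence "F 1 - F 0 = arctan (sqrt k / 2) / sqrt k + arctan (sqrt k / 2) / sqrt k"
      unfolding F_def by (simp only: arctan_minus)
    thus ?thesis by simp
  qed
  ultimately show ?thesis by simp
qed

lemma H_bound:
  fixes X :: real assumes X: "X \<ge> 0"
  shows "integral {0..1} (\<lambda>x. exp (- X * cos (2*pi*x))) \<le> 5 * exp X / sqrt (1 + X)"
proof -
  define k where "k = 2 * (1 + X)"
  have k0: "k > 0" unfolding k_def using X by simp
  define G where "G = exp X * (3/2) * (2 * arctan (sqrt k / 2) / sqrt k)"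
  have hG: "((\<lambda>x. exp X * (3/2) * (1 / (1 + k * (x - 1/2)^2))) has_integral G) {0..1}"
    unfolding G_def by (intro has_integral_mult_right arctan_has_integral k0)
  have pt: "exp (- X * cos (2*pi*x)) \<le> exp X * (3/2) * (1 / (1 + k * (x - 1/2)^2))" if x: "x \<in> {0..1}" for x
  proof -
    define z2 where "z2 = (x - 1/2)^2"
    have z20: "z2 \<ge> 0" unfolding z2_def by simp
    have "1/4 - z2 = x * (1 - x)" unfolding z2_def by (simp add: power2_eq_square algebra_simps)
    moreover have "x * (1 - x) \<ge> 0" using x by (intro mult_nonneg_nonneg) auto
    ultimately have z2q: "z2 \<le> 1/4" by linarith
    have c: "1 + cos (2*pi*x) \<ge> 2 * z2" unfolding z2_def using x by (intro one_plus_cos_lower) auto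
    have "- X * cos (2*pi*x) = X + (- (X * (1 + cos (2*pi*x))))" by (simp add: algebra_simps)
    hence "exp (- X * cos (2*pi*x)) = exp X * exp (- (X * (1 + cos (2*pi*x))))" by (simp only: exp_add)
    also have "\<dots> \<le> exp X * exp (- (2 * X * z2))"
    proof -
      have "X * (2 * z2) \<le> X * (1 + cos (2*pi*x))" using c X by (intro mult_left_mono) auto
      hence "- (X * (1 + cos (2*pi*x))) \<le> - (2 * X * z2)" by simp
      thus ?thesis by (intro mult_left_mono) auto
    qed
    also have "exp (- (2 * X * z2)) \<le> 1 / (1 + 2 * X * z2)"
    proof -
      have "1 + 2 * X * z2 \<le> exp (2 * X * z2)" by (rule exp_ge_add_one_self)
      moreover have "1 + 2 * X * z2 > 0" using X z20 by (simp add: add_pos_nonneg)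
      ultimately have "1 / exp (2 * X * z2) \<le> 1 / (1 + 2 * X * z2)" by (intro divide_left_mono) auto
      thus ?thesis by (simp add: exp_minus inverse_eq_divide)
    qed
    hence "exp X * exp (- (2 * X * z2)) \<le> exp X * (1 / (1 + 2 * X * z2))" by (intro mult_left_mono) auto
    also have "1 / (1 + 2 * X * z2) \<le> (3/2) * (1 / (1 + k * z2))"
    proof -
      have p: "1 + 2 * X * z2 > 0" using X z20 by (simp add: add_pos_nonneg)
      have B: "1 + k * z2 \<le> (3/2) * (1 + 2 * X * z2)" unfolding k_def using z2q mult_nonneg_nonneg[OF X z20] by (simp add: algebra_simps)
      have Bp: "1 + k * z2 > 0" using k0 z20 by (simp add: add_pos_nonneg)
      have "(3/2) / ((3/2) * (1 + 2 * X * z2)) \<le> (3/2) / (1 + k * z2)"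
        using B Bp by (intro divide_left_mono) auto
      moreover have "(3/2) / ((3/2) * (1 + 2 * X * z2)) = 1 / (1 + 2 * X * z2)" using p by (simp add: field_simps)
      ultimately show ?thesis by simp
    qed
    hence "exp X * (1 / (1 + 2 * X * z2)) \<le> exp X * ((3/2) * (1 / (1 + k * z2)))" by (intro mult_left_mono) auto
    finally show ?thesis unfolding z2_def by simp
  qed
  have "arctan (sqrt k / 2) \<ge> 0"
    using arctan_less_iff[of 0 "sqrt k / 2"] k0 by (simp add: less_imp_le)
  hence G0: "G \<ge> 0" unfolding G_def using k0 by simp
  have "integral {0..1} (\<lambda>x. exp (- X * cos (2*pi*x))) \<le> G"
    by (rule integral_le_has[OF hG pt G0])
  also have "G \<le> exp X * (3/2) * (pi / sqrt k)"
  proof -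
    have "2 * arctan (sqrt k / 2) \<le> pi" using arctan_ubound[of "sqrt k / 2"] by simp
    hence "2 * arctan (sqrt k / 2) / sqrt k \<le> pi / sqrt k" using k0 by (intro divide_right_mono) auto
    thus ?thesis unfolding G_def by (intro mult_left_mono) auto
  qed
  also have "\<dots> \<le> 5 * exp X / sqrt (1 + X)"
  proof -
    have sk: "sqrt k = sqrt 2 * sqrt (1 + X)" unfolding k_def by (simp only: real_sqrt_mult)
    have s2: "sqrt 2 \<ge> 7/5" by (rule real_le_rsqrt) (simp add: power2_eq_square)
    have "(3/2) * pi / sqrt 2 \<le> (3/2) * 4 / (7/5)"
      using pi_less_4 s2 by (intro frac_le) auto
    hence "(3/2) * pi / sqrt 2 \<le> 5" by simp
    hence "exp X * ((3/2) * pi / sqrt 2) / sqrt (1+X) \<le> exp X * 5 / sqrt (1+X)"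
      using X by (intro divide_right_mono mult_left_mono) auto
    moreover have "exp X * (3/2) * (pi / sqrt k) = exp X * ((3/2) * pi / sqrt 2) / sqrt (1+X)"
      unfolding sk by simp
    ultimately show ?thesis by simp
  qed
  finally show ?thesis .
qed



lemma besselK_nonneg: "s \<ge> 0 \<Longrightarrow> besselK m s \<ge> 0"
proof -
  have "integral {0..} (\<lambda>\<alpha>. exp (- s * cosh \<alpha>) * cosh (real_of_int m * \<alpha>)) \<ge> 0"
  proof (cases "(\<lambda>\<alpha>. exp (- s * cosh \<alpha>) * cosh (real_of_int m * \<alpha>)) integrable_on {0..}")
    case True thus ?thesis by (intro integral_nonneg) auto
  next
    case False thus ?thesis by (simp add: not_integrable_integral)
  qed
  thus ?thesis unfolding besselK_def .
qed

definition Cp :: real where "Cp = 40 * pi * exp (1/8)"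

lemma Cp_pos: "Cp > 0" unfolding Cp_def by simp

lemma prod_bound:
  fixes n :: int and s t :: real
  assumes s: "s > 0" and t: "t \<ge> 0"
  defines "\<nu> \<equiv> real_of_int \<bar>n\<bar> + 1"
  defines "R \<equiv> sqrt (s^2 + \<nu>^2)"
  shows "besselK (n+1) s * \<bar>besselI n t\<bar> \<le> Cp * (sqrt R / s) * exp (- (s - t) * (R/s)) / sqrt (1 + t * (R/s))"
proof -
  define N where "N = nat \<bar>n\<bar>"
  have nuN: "\<nu> = real N + 1" unfolding \<nu>_def N_def by simp
  have nu1: "\<nu> \<ge> 1" unfolding \<nu>_def by simp
  have R2: "R^2 = s^2 + \<nu>^2" unfolding R_def by simp
  have Rnu: "R \<ge> \<nu>" unfolding R_def by (rule real_le_rsqrt) simp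
  have R1: "R \<ge> 1" using Rnu nu1 by simp
  define b where "b = ln ((\<nu> + R) / s)"
  define E where "E = (\<nu> + R) / s"
  have E0: "E > 0" unfolding E_def using s nu1 R1 by simp
  have expb: "exp b = E" unfolding b_def E_def[symmetric] using E0 by simp
  have expmb: "exp (-b) = s / (\<nu> + R)" using expb unfolding E_def by (simp add: exp_minus inverse_eq_divide)
  have ch: "(exp b + exp (-b)) / 2 = R / s"
  proof -
    have "(\<nu> + R)^2 + s^2 = 2 * R * (\<nu> + R)" using R2 by (simp add: power2_eq_square algebra_simps)
    hence eq: "(\<nu> + R)^2 + s^2 = 2 * R * (\<nu> + R)" .
    have p: "\<nu> + R > 0" using nu1 R1 by simp
    have "(\<nu> + R) / s + s / (\<nu> + R) = ((\<nu> + R)^2 + s^2) / (s * (\<nu> + R))"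
      using p s by (simp add: field_simps power2_eq_square)
    also have "\<dots> = 2 * R * (\<nu> + R) / (s * (\<nu> + R))" unfolding eq ..
    also have "\<dots> = 2 * R / s" using p by simp
    finally have "(\<nu> + R) / s + s / (\<nu> + R) = 2 * R / s" .
    thus ?thesis unfolding expmb expb E_def by simp
  qed
  define X where "X = t * (R / s)"
  have X0: "X \<ge> 0" unfolding X_def using t s R1 by simp
  have m: "\<bar>real_of_int (n+1)\<bar> \<le> \<nu>" unfolding \<nu>_def by linarith
  have K: "besselK (n+1) s \<le> 4 * pi * exp (1/8) * exp (- R + \<nu> * b) / sqrt R"
    using besselK_bound[OF s nu1 m] unfolding R_def[symmetric] b_def by simp
  have I: "\<bar>besselI n t\<bar> \<le> exp (- real N * b) * (5 * exp X / sqrt (1 + X))"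
  proof -
    have "\<bar>besselI n t\<bar> \<le> exp (- real N * b) * integral {0..1} (\<lambda>x. exp (- X * cos (2*pi*x)))"
      using besselI_bound[of n t b] unfolding ch X_def N_def by simp
    also have "\<dots> \<le> exp (- real N * b) * (5 * exp X / sqrt (1 + X))"
      by (intro mult_left_mono H_bound X0) auto
    finally show ?thesis .
  qed
  have "besselK (n+1) s * \<bar>besselI n t\<bar> \<le>
       (4 * pi * exp (1/8) * exp (- R + \<nu> * b) / sqrt R) * (exp (- real N * b) * (5 * exp X / sqrt (1 + X)))"
    using K I besselK_nonneg[of s "n+1"] s by (intro mult_mono) auto
  also have "\<dots> = 20 * pi * exp (1/8) * (exp (- R + \<nu> * b) * exp (- real N * b) * exp X) / (sqrt R * sqrt (1 + X))"
    by simp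
  also have "exp (- R + \<nu> * b) * exp (- real N * b) * exp X = E * exp (- (s - t) * (R/s))"
  proof -
    have "- R + \<nu> * b + (- real N * b) + X = b + (- (s - t) * (R/s))"
      unfolding X_def nuN using s by (simp add: field_simps)
    hence "exp (- R + \<nu> * b + (- real N * b) + X) = exp b * exp (- (s - t) * (R/s))"
      by (simp only: exp_add)
    thus ?thesis unfolding expb by (simp only: exp_add)
  qed
  also have "20 * pi * exp (1/8) * (E * exp (- (s - t) * (R/s))) / (sqrt R * sqrt (1 + X))
      \<le> 20 * pi * exp (1/8) * ((2 * R / s) * exp (- (s - t) * (R/s))) / (sqrt R * sqrt (1 + X))"
  proof -
    have "E \<le> 2 * R / s" unfolding E_def using Rnu s by (intro divide_right_mono) auto
    thus ?thesis using R1 X0 by (intro divide_right_mono mult_left_mono mult_right_mono) auto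
  qed
  also have "\<dots> = Cp * (sqrt R / s) * exp (- (s - t) * (R/s)) / sqrt (1 + t * (R/s))"
  proof -
    have sR: "sqrt R > 0" using R1 by simp
    have "(2 * R / s) / sqrt R = (2 / s) * (R / sqrt R)" by (simp add: divide_inverse ac_simps)
    also have "R / sqrt R = sqrt R" using R1 by (intro real_div_sqrt) simp
    finally have "(2 * R / s) / sqrt R = 2 * (sqrt R / s)" by simp
    note f = this
    define ex where "ex = exp (- (s - t) * (R/s))"
    define q where "q = sqrt (1 + X)"
    have q0: "q > 0" unfolding q_def using X0 by simp
    have "20 * pi * exp (1/8) * ((2 * R / s) * ex) / (sqrt R * q) = 20 * pi * exp (1/8) * (((2 * R / s) / sqrt R) * ex) / q"
      using sR q0 by (simp add: field_simps)
    also have "\<dots> = Cp * (sqrt R / s) * ex / q" unfolding f Cp_def by simp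
    finally show ?thesis unfolding ex_def q_def X_def .
  qed
  finally show ?thesis .
qed



lemma ratio_mono:
  fixes s M \<nu> :: real assumes "0 \<le> s" "s \<le> M" "\<nu> > 0"
  shows "s / sqrt (s^2 + \<nu>^2) \<le> M / sqrt (M^2 + \<nu>^2)"
proof -
  have "s^2 \<le> M^2" using assms by (intro power_mono) auto
  hence "s^2 * (M^2 + \<nu>^2) \<le> M^2 * (s^2 + \<nu>^2)" using assms by (simp add: algebra_simps mult_right_mono)
  hence "sqrt (s^2 * (M^2 + \<nu>^2)) \<le> sqrt (M^2 * (s^2 + \<nu>^2))" by (rule real_sqrt_le_mono)
  hence "s * sqrt (M^2 + \<nu>^2) \<le> M * sqrt (s^2 + \<nu>^2)" using assms by (simp add: real_sqrt_mult)
  moreover have "sqrt (s^2 + \<nu>^2) > 0" "sqrt (M^2 + \<nu>^2) > 0" using assms by (simp_all add: add_nonneg_pos)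
  ultimately show ?thesis by (simp add: divide_simps mult.commute)
qed

lemma frac_t_mono:
  fixes t s c :: real assumes "0 \<le> t" "t \<le> s" "c \<ge> 0"
  shows "t / sqrt (1 + t * c) \<le> s / sqrt (1 + s * c)"
proof -
  have "t^2 \<le> s^2" using assms by (intro power_mono) auto
  moreover have "t^2 * (s * c) \<le> s^2 * (t * c)"
  proof -
    have "t * (t * s * c) \<le> s * (t * s * c)" using assms by (intro mult_right_mono) auto
    thus ?thesis by (simp add: power2_eq_square algebra_simps)
  qed
  ultimately have "t^2 * (1 + s * c) \<le> s^2 * (1 + t * c)" by (simp add: algebra_simps)
  hence "sqrt (t^2 * (1 + s * c)) \<le> sqrt (s^2 * (1 + t * c))" by (rule real_sqrt_le_mono)
  hence "t * sqrt (1 + s * c) \<le> s * sqrt (1 + t * c)" using assms by (simp add: real_sqrt_mult)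
  moreover have "sqrt (1 + t * c) > 0" "sqrt (1 + s * c) > 0" using assms by (simp_all add: add_pos_nonneg)
  ultimately show ?thesis by (simp add: divide_simps mult.commute)
qed

lemma exp_decay_has_integral:
  fixes A c a s :: real assumes "c > 0" "a \<le> s"
  shows "((\<lambda>t. A * exp (- (s - t) * c)) has_integral (A * (1 - exp (- (s - a) * c)) / c)) {a..s}"
proof -
  define F where "F = (\<lambda>t::real. A * exp (- (s - t) * c) / c)"
  have d: "(F has_real_derivative A * exp (- (s - t) * c)) (at t)" for t
  proof -
    have "(F has_real_derivative A * (exp (- (s - t) * c) * ((- (0 - 1)) * c)) / c) (at t)"
    proof -
      have h: "((\<lambda>t. - (s - t) * c) has_real_derivative (- (0 - 1)) * c) (at t)"
        by (intro DERIV_cmult_right DERIV_minus DERIV_diff DERIV_ident DERIV_const)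
      have "((\<lambda>t. exp (- (s - t) * c)) has_real_derivative exp (- (s - t) * c) * ((- (0 - 1)) * c)) (at t)"
        by (rule DERIV_chain2[OF DERIV_exp h])
      thus ?thesis unfolding F_def by (intro DERIV_cdivide DERIV_cmult)
    qed
    thus ?thesis using assms by simp
  qed
  have "((\<lambda>t. A * exp (- (s - t) * c)) has_integral (F s - F a)) {a..s}"
    using d assms by (intro fundamental_theorem_of_calculus)
      (auto simp: has_real_derivative_iff_has_vector_derivative[symmetric] intro: has_field_derivative_at_within)
  moreover have "F s - F a = A * (1 - exp (- (s - a) * c)) / c" unfolding F_def by (simp add: algebra_simps diff_divide_distrib)
  ultimately show ?thesis by simp
qed

lemma I1_inner:
  fixes n :: int and s M :: real
  assumes s0: "0 \<le> s" and sM: "s \<le> M"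
  defines "\<nu> \<equiv> real_of_int \<bar>n\<bar> + 1"
  shows "integral {0..s} (\<lambda>t. besselK (n+1) s * besselI n t * t) \<le> Cp * (M / sqrt (M^2 + \<nu>^2))"
proof -
  have nu1: "\<nu> \<ge> 1" unfolding \<nu>_def by simp
  have bnd0: "Cp * (M / sqrt (M^2 + \<nu>^2)) \<ge> 0" using Cp_pos s0 sM by simp
  show ?thesis
  proof (cases "s = 0")
    case True thus ?thesis using bnd0 by simp
  next
    case False
    hence s: "s > 0" using s0 by simp
    define R where "R = sqrt (s^2 + \<nu>^2)"
    have Rnu: "R \<ge> \<nu>" unfolding R_def by (rule real_le_rsqrt) simp
    have R1: "R \<ge> 1" using Rnu nu1 by simp
    define c where "c = R / s"
    have c0: "c > 0" unfolding c_def using s R1 by simp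
    have sc: "s * c = R" unfolding c_def using s by simp
    define A where "A = Cp * (sqrt R / s) * (s / sqrt (1 + R))"
    have A0: "A \<ge> 0" unfolding A_def using Cp_pos s R1 by simp
    have pt: "besselK (n+1) s * besselI n t * t \<le> A * exp (- (s - t) * c)" if t: "t \<in> {0..s}" for t
    proof -
      have t0: "t \<ge> 0" and ts: "t \<le> s" using t by auto
      have "besselK (n+1) s * besselI n t * t \<le> besselK (n+1) s * \<bar>besselI n t\<bar> * t"
        using t0 besselK_nonneg[of s "n+1"] s by (intro mult_right_mono mult_left_mono) auto
      also have "\<dots> \<le> (Cp * (sqrt R / s) * exp (- (s - t) * c) / sqrt (1 + t * c)) * t"
        using prod_bound[OF s t0, of n] t0 unfolding R_def \<nu>_def c_def by (intro mult_right_mono) auto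
      also have "\<dots> = Cp * (sqrt R / s) * exp (- (s - t) * c) * (t / sqrt (1 + t * c))" by simp
      also have "\<dots> \<le> Cp * (sqrt R / s) * exp (- (s - t) * c) * (s / sqrt (1 + s * c))"
        using frac_t_mono[OF t0 ts, of c] c0 Cp_pos s R1 by (intro mult_left_mono) auto
      also have "\<dots> = A * exp (- (s - t) * c)" unfolding A_def sc by simp
      finally show ?thesis .
    qed
    have G0: "A * (1 - exp (- (s - 0) * c)) / c \<ge> 0" using A0 c0 s by simp
    have "integral {0..s} (\<lambda>t. besselK (n+1) s * besselI n t * t) \<le> A * (1 - exp (- (s - 0) * c)) / c"
      by (rule integral_le_has[OF exp_decay_has_integral[OF c0 s0] pt G0])
    also have "\<dots> \<le> A / c"
      using A0 c0 by (intro divide_right_mono) (auto simp: mult_left_le)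
    also have "A / c \<le> Cp * (s / R)"
    proof -
      have "sqrt R \<le> sqrt (1 + R)" by simp
      hence q: "sqrt R / sqrt (1 + R) \<le> 1" using R1 by simp
      have "A / c = Cp * (sqrt R / sqrt (1 + R)) * (s / R)" unfolding A_def c_def using s R1 by (simp add: field_simps)
      also have "\<dots> \<le> Cp * 1 * (s / R)" using q Cp_pos s R1 by (intro mult_right_mono mult_left_mono) auto
      finally show ?thesis by simp
    qed
    also have "\<dots> \<le> Cp * (M / sqrt (M^2 + \<nu>^2))"
      using ratio_mono[OF s0 sM, of \<nu>] nu1 Cp_pos unfolding R_def by (intro mult_left_mono) auto
    finally show ?thesis .
  qed
qed



lemma exp_decay_has_integral2:
  fixes A c a b d :: real assumes "c > 0" "a \<le> b"
  shows "((\<lambda>x. A * exp (- (x - d) * c)) has_integral (A * (exp (- (a - d) * c) - exp (- (b - d) * c)) / c)) {a..b}"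
proof -
  define F where "F = (\<lambda>x::real. - A * exp (- (x - d) * c) / c)"
  have d: "(F has_real_derivative A * exp (- (x - d) * c)) (at x)" for x
  proof -
    have h: "((\<lambda>x. - (x - d) * c) has_real_derivative (- (1 - 0)) * c) (at x)"
      by (intro DERIV_cmult_right DERIV_minus DERIV_diff DERIV_ident DERIV_const)
    have "((\<lambda>x. exp (- (x - d) * c)) has_real_derivative exp (- (x - d) * c) * ((- (1 - 0)) * c)) (at x)"
      by (rule DERIV_chain2[OF DERIV_exp h])
    hence "(F has_real_derivative - A * (exp (- (x - d) * c) * ((- (1 - 0)) * c)) / c) (at x)"
      unfolding F_def by (intro DERIV_cdivide DERIV_cmult)
    thus ?thesis using assms by simp
  qed
  have "((\<lambda>x. A * exp (- (x - d) * c)) has_integral (F b - F a)) {a..b}"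
    using d assms by (intro fundamental_theorem_of_calculus)
      (auto simp: has_real_derivative_iff_has_vector_derivative[symmetric] intro: has_field_derivative_at_within)
  moreover have "F b - F a = A * (exp (- (a - d) * c) - exp (- (b - d) * c)) / c"
    unfolding F_def by (simp add: algebra_simps diff_divide_distrib)
  ultimately show ?thesis by simp
qed

lemma sqrt_le_exp4: fixes R :: real assumes "R \<ge> 0" shows "sqrt R \<le> exp (R/4)"
proof -
  have "R \<le> (1 + R/4)^2" using sum_squares_ge_zero[of "1 - R/4" 0] by (simp add: power2_eq_square algebra_simps)
  hence "sqrt R \<le> sqrt ((1 + R/4)^2)" by (rule real_sqrt_le_mono)
  also have "\<dots> = 1 + R/4" using assms by simp
  also have "\<dots> \<le> exp (R/4)" by (rule exp_ge_add_one_self)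
  finally show ?thesis .
qed

lemma tail_bound:
  fixes t M \<nu> :: real assumes "0 \<le> t" "t \<le> M" "\<nu> \<ge> 1"
  shows "8 * (exp (- (t - (-\<nu>)) * (1/8)) - exp (- (M - (-\<nu>)) * (1/8))) \<le> 16 * (M / (M + \<nu>))"
proof -
  define D where "D = exp (- t/8) - exp (- M/8)"
  have "- (t - (-\<nu>)) * (1/8) = (-\<nu>/8) + (- t/8)" by (simp add: field_simps)
  hence e1: "exp (- (t - (-\<nu>)) * (1/8)) = exp (-\<nu>/8) * exp (- t/8)" by (simp only: exp_add)
  have "- (M - (-\<nu>)) * (1/8) = (-\<nu>/8) + (- M/8)" by (simp add: field_simps)
  hence e2: "exp (- (M - (-\<nu>)) * (1/8)) = exp (-\<nu>/8) * exp (- M/8)" by (simp only: exp_add)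
  have L: "exp (- (t - (-\<nu>)) * (1/8)) - exp (- (M - (-\<nu>)) * (1/8)) = exp (-\<nu>/8) * D"
    unfolding e1 e2 D_def by (simp add: algebra_simps)
  have "exp (- t/8) \<le> 1" using assms by simp
  moreover have "exp (- M/8) \<ge> 0" by simp
  ultimately have D1: "D \<le> 1" unfolding D_def by linarith
  have DM: "D \<le> M/8"
  proof -
    have "- M/8 = (- t/8) + (- ((M - t)/8))" by (simp add: field_simps)
    hence "exp (- M/8) = exp (- t/8) * exp (- ((M - t)/8))" by (simp only: exp_add)
    hence "D = exp (- t/8) * (1 - exp (- ((M - t)/8)))" unfolding D_def by (simp add: algebra_simps)
    moreover have "1 - exp (- ((M - t)/8)) \<le> (M - t)/8" using exp_ge_add_one_self[of "- ((M - t)/8)"] by linarith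
    moreover have "exp (- t/8) \<le> 1" using assms by simp
    moreover have "1 - exp (- ((M - t)/8)) \<ge> 0" using assms by simp
    ultimately have "D \<le> 1 * (1 - exp (- ((M - t)/8)))" by (simp only:) (rule mult_right_mono)
    hence "D \<le> 1 - exp (- ((M - t)/8))" by simp
    hence "D \<le> (M - t)/8" using \<open>1 - exp (- ((M - t)/8)) \<le> (M - t)/8\<close> by (rule order_trans)
    thus ?thesis using assms by (simp add: divide_right_mono)
  qed
  have D0: "D \<ge> 0" unfolding D_def using assms by simp
  have en1: "exp (-\<nu>/8) \<le> 1" using assms by simp
  have en2: "exp (-\<nu>/8) \<le> 8/\<nu>"
  proof -
    have "\<nu>/8 \<le> exp (\<nu>/8)" using exp_ge_add_one_self[of "\<nu>/8"] by linarith
    hence "1 / exp (\<nu>/8) \<le> 1 / (\<nu>/8)" using assms by (intro divide_left_mono) auto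
    thus ?thesis by (simp add: exp_minus inverse_eq_divide)
  qed
  have Mpos: "M + \<nu> > 0" using assms by simp
  show ?thesis
  proof (cases "M \<ge> \<nu>")
    case True
    have "exp (-\<nu>/8) * D \<le> 1 * 1" using en1 D1 D0 by (intro mult_mono) auto
    moreover have "1 \<le> 2 * (M / (M + \<nu>))" using True Mpos by (simp add: field_simps)
    ultimately show ?thesis unfolding L by simp
  next
    case False
    have "exp (-\<nu>/8) * D \<le> (8/\<nu>) * (M/8)" using en2 DM D0 assms by (intro mult_mono) auto
    also have "(8/\<nu>) * (M/8) = M / \<nu>" using assms by simp
    also have "M / \<nu> \<le> 2 * (M / (M + \<nu>))" using False Mpos assms mult_left_mono[of M \<nu> M] by (simp add: field_simps)
    finally show ?thesis unfolding L by simp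
  qed
qed

lemma I2_point:
  fixes n :: int and s t M :: real
  assumes s: "s > 0" and t0: "0 \<le> t" and ts: "t \<le> s" and sM: "s \<le> M"
  defines "\<nu> \<equiv> real_of_int \<bar>n\<bar> + 1"
  shows "besselK (n+1) s * besselI n t * s \<le>
    Cp * sqrt 2 * exp (- (s - t) * (sqrt (M^2 + \<nu>^2) / M)) + Cp * exp (- (s - (-\<nu>)) * (1/8))"
proof -
  have nu1: "\<nu> \<ge> 1" unfolding \<nu>_def by simp
  define R where "R = sqrt (s^2 + \<nu>^2)"
  define RM where "RM = sqrt (M^2 + \<nu>^2)"
  have Rnu: "R \<ge> \<nu>" unfolding R_def by (rule real_le_rsqrt) simp
  have Rs: "R \<ge> s" unfolding R_def by (rule real_le_rsqrt) simp
  have R1: "R \<ge> 1" using Rnu nu1 by simp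
  have M0: "M > 0" using s sM by simp
  have RM0: "RM > 0" unfolding RM_def using nu1 by (simp add: add_nonneg_pos)
  define c where "c = R / s"
  have c0: "c > 0" unfolding c_def using s R1 by simp
  define cM where "cM = RM / M"
  have ccM: "cM \<le> c"
  proof -
    have "s / R \<le> M / RM" using ratio_mono[of s M \<nu>] s sM nu1 unfolding R_def RM_def by simp
    thus ?thesis unfolding c_def cM_def using s M0 R1 RM0 by (simp add: field_simps)
  qed
  define ex where "ex = exp (- (s - t) * c)"
  define q where "q = sqrt (1 + t * c)"
  have q1: "q \<ge> 1" unfolding q_def using t0 c0 by simp
  have "besselK (n+1) s * besselI n t * s \<le> besselK (n+1) s * \<bar>besselI n t\<bar> * s"
    using s besselK_nonneg[of s "n+1"] by (intro mult_right_mono mult_left_mono) auto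
  also have "\<dots> \<le> (Cp * (sqrt R / s) * ex / q) * s"
    using prod_bound[OF s t0, of n] s unfolding R_def \<nu>_def c_def ex_def q_def by (intro mult_right_mono) auto
  also have "\<dots> = Cp * (sqrt R * ex / q)" using s by simp
  also have "sqrt R * ex / q \<le> sqrt 2 * exp (- (s - t) * cM) + exp (- (s - (-\<nu>)) * (1/8))"
  proof (cases "s \<le> 2 * t")
    case True
    have "t * c \<ge> R / 2"
    proof -
      have "(s/2) * c \<le> t * c" using True c0 by (intro mult_right_mono) auto
      moreover have "(s/2) * c = R/2" unfolding c_def using s by simp
      ultimately show ?thesis by simp
    qed
    hence "R \<le> 2 * (1 + t * c)" by simp
    hence "sqrt R \<le> sqrt (2 * (1 + t * c))" by (rule real_sqrt_le_mono)
    hence sq: "sqrt R \<le> sqrt 2 * q" unfolding q_def by (simp only: real_sqrt_mult)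
    have "ex \<le> exp (- (s - t) * cM)" unfolding ex_def using mult_left_mono[OF ccM, of "s - t"] ts by (simp add: algebra_simps)
    hence "sqrt R * ex \<le> (sqrt 2 * q) * exp (- (s - t) * cM)" using sq q1 by (intro mult_mono) (auto simp: ex_def)
    hence "sqrt R * ex / q \<le> sqrt 2 * exp (- (s - t) * cM)" using q1 by (simp add: divide_simps mult_ac)
    thus ?thesis by (smt (verit) exp_gt_zero)
  next
    case False
    have "(s - t) * c \<ge> R / 2"
    proof -
      have "(s/2) * c \<le> (s - t) * c" using False c0 by (intro mult_right_mono) auto
      moreover have "(s/2) * c = R/2" unfolding c_def using s by simp
      ultimately show ?thesis by simp
    qed
    hence ex2: "ex \<le> exp (- R / 2)" unfolding ex_def by (simp add: algebra_simps)
    have "sqrt R * ex / q \<le> sqrt R * ex" using q1 R1 by (simp add: divide_simps ex_def mult_left_mono)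
    also have "\<dots> \<le> exp (R/4) * exp (- R/2)" using sqrt_le_exp4[of R] R1 ex2 by (intro mult_mono) (auto simp: ex_def)
    also have "\<dots> = exp (- R/4)" by (simp add: exp_add[symmetric])
    also have "\<dots> \<le> exp (- (s - (-\<nu>)) * (1/8))" using Rs Rnu by simp
    finally show ?thesis by (smt (verit) exp_gt_zero real_sqrt_ge_zero mult_nonneg_nonneg)
  qed
  hence "Cp * (sqrt R * ex / q) \<le> Cp * (sqrt 2 * exp (- (s - t) * cM) + exp (- (s - (-\<nu>)) * (1/8)))"
    using Cp_pos by (intro mult_left_mono) auto
  finally show ?thesis unfolding cM_def RM_def by (simp add: algebra_simps)
qed

lemma I2_inner:
  fixes n :: int and t M :: real
  assumes t0: "0 \<le> t" and tM: "t \<le> M"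
  defines "\<nu> \<equiv> real_of_int \<bar>n\<bar> + 1"
  shows "integral {t..M} (\<lambda>s. besselK (n+1) s * besselI n t * s) \<le> 18 * Cp * (M / sqrt (M^2 + \<nu>^2))"
proof -
  have nu1: "\<nu> \<ge> 1" unfolding \<nu>_def by simp
  define RM where "RM = sqrt (M^2 + \<nu>^2)"
  have RM0: "RM > 0" unfolding RM_def using nu1 by (simp add: add_nonneg_pos)
  have bnd0: "18 * Cp * (M / RM) \<ge> 0" using Cp_pos t0 tM RM0 by simp
  show ?thesis
  proof (cases "M = 0")
    case True
    hence "t = 0" using t0 tM by simp
    thus ?thesis using True bnd0 unfolding RM_def by simp
  next
    case False
    hence M0: "M > 0" using t0 tM by simp
    define cM where "cM = RM / M"
    have cM0: "cM > 0" unfolding cM_def using M0 RM0 by simp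
    define G1 where "G1 = Cp * sqrt 2 * (exp (- (t - t) * cM) - exp (- (M - t) * cM)) / cM"
    define G2 where "G2 = Cp * (exp (- (t - (-\<nu>)) * (1/8)) - exp (- (M - (-\<nu>)) * (1/8))) / (1/8)"
    have hg: "((\<lambda>s. Cp * sqrt 2 * exp (- (s - t) * cM) + Cp * exp (- (s - (-\<nu>)) * (1/8))) has_integral (G1 + G2)) {t..M}"
      unfolding G1_def G2_def
      by (intro has_integral_add exp_decay_has_integral2 cM0 tM) auto
    have pt: "besselK (n+1) s * besselI n t * s \<le> Cp * sqrt 2 * exp (- (s - t) * cM) + Cp * exp (- (s - (-\<nu>)) * (1/8))"
      if s: "s \<in> {t..M}" for s
    proof (cases "s = 0")
      case True thus ?thesis using Cp_pos by (simp add: add_nonneg_nonneg)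
    next
      case False
      hence "s > 0" using s t0 by simp
      thus ?thesis using I2_point[of s t M n] s t0 unfolding cM_def RM_def \<nu>_def by simp
    qed
    have G1b: "G1 \<le> 2 * Cp * (M / RM)"
    proof -
      have "G1 = Cp * sqrt 2 * (1 - exp (- (M - t) * cM)) / cM" unfolding G1_def by simp
      also have "\<dots> \<le> Cp * sqrt 2 * 1 / cM"
        using Cp_pos cM0 by (intro divide_right_mono mult_left_mono) auto
      also have "\<dots> = Cp * sqrt 2 * (M / RM)" unfolding cM_def using M0 RM0 by simp
      also have "\<dots> \<le> Cp * 2 * (M / RM)"
      proof -
        have "sqrt 2 \<le> 2" by (rule real_sqrt_le_iff[THEN iffD2, of 2 4, simplified]) 
        thus ?thesis using Cp_pos M0 RM0 by (intro mult_right_mono mult_left_mono) auto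
      qed
      finally show ?thesis by (simp add: mult.commute)
    qed
    have G2b: "G2 \<le> 16 * Cp * (M / RM)"
    proof -
      have "G2 = Cp * (8 * (exp (- (t - (-\<nu>)) * (1/8)) - exp (- (M - (-\<nu>)) * (1/8))))" unfolding G2_def by simp
      also have "\<dots> \<le> Cp * (16 * (M / (M + \<nu>)))"
        using tail_bound[OF t0 tM nu1] Cp_pos by (intro mult_left_mono) auto
      also have "M / (M + \<nu>) \<le> M / RM"
      proof -
        have "M^2 + \<nu>^2 \<le> (M + \<nu>)^2" using M0 nu1 by (simp add: power2_eq_square algebra_simps)
        hence "sqrt (M^2 + \<nu>^2) \<le> sqrt ((M + \<nu>)^2)" by (rule real_sqrt_le_mono)
        hence "RM \<le> M + \<nu>" unfolding RM_def using M0 nu1 by simp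
        thus ?thesis using M0 RM0 by (intro divide_left_mono) auto
      qed
      hence "Cp * (16 * (M / (M + \<nu>))) \<le> Cp * (16 * (M / RM))" using Cp_pos by (intro mult_left_mono) auto
      finally show ?thesis by (simp add: ac_simps)
    qed
    have G0: "G1 + G2 \<ge> 0"
    proof -
      have "(M - t) * cM \<ge> 0" using tM cM0 by simp
      hence "exp (- (M - t) * cM) \<le> 1" by (simp add: algebra_simps)
      hence "G1 \<ge> 0" unfolding G1_def using Cp_pos cM0 by simp
      moreover have "G2 \<ge> 0" unfolding G2_def using Cp_pos tM by simp
      ultimately show ?thesis by simp
    qed
    have "integral {t..M} (\<lambda>s. besselK (n+1) s * besselI n t * s) \<le> G1 + G2"
      by (rule integral_le_has[OF hg pt G0])
    also have "\<dots> \<le> 2 * Cp * (M / RM) + 16 * Cp * (M / RM)" using G1b G2b by (rule add_mono)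
    also have "\<dots> = 18 * Cp * (M / RM)" by (simp add: field_simps)
    finally show ?thesis unfolding RM_def .
  qed
qed



theorem lemma3p4:
  shows "\<exists>C::real. \<forall>m n::int. m \<noteq> 0 \<longrightarrow>
           calI1 m n \<le> C / sqrt (1 + (real_of_int m)\<^sup>2 + (real_of_int n)\<^sup>2) \<and>
           calI2 m n \<le> C / sqrt (1 + (real_of_int m)\<^sup>2 + (real_of_int n)\<^sup>2)"
proof (intro exI[of _ "18 * Cp"] allI impI)
  fix m n :: int assume m0: "m \<noteq> 0"
  define M where "M = \<bar>real_of_int m\<bar>"
  have M0: "M > 0" unfolding M_def using m0 by simp
  define \<nu> where "\<nu> = real_of_int \<bar>n\<bar> + 1"
  have nu1: "\<nu> \<ge> 1" unfolding \<nu>_def by simp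
  define RM where "RM = sqrt (M^2 + \<nu>^2)"
  have RM0: "RM > 0" unfolding RM_def using nu1 by (simp add: add_nonneg_pos)
  have Q: "18 * Cp / RM \<le> 18 * Cp / sqrt (1 + (real_of_int m)\<^sup>2 + (real_of_int n)\<^sup>2)"
  proof -
    have "(real_of_int n)^2 + 1 \<le> \<nu>^2"
    proof -
      have "\<nu>^2 = (real_of_int \<bar>n\<bar>)^2 + 2 * real_of_int \<bar>n\<bar> + 1" unfolding \<nu>_def by (simp add: power2_eq_square algebra_simps)
      moreover have "(real_of_int \<bar>n\<bar>)^2 = (real_of_int n)^2" by simp
      ultimately show ?thesis by simp
    qed
    moreover have "M^2 = (real_of_int m)^2" unfolding M_def by simp
    ultimately have "1 + (real_of_int m)\<^sup>2 + (real_of_int n)\<^sup>2 \<le> M^2 + \<nu>^2" by simp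
    hence "sqrt (1 + (real_of_int m)\<^sup>2 + (real_of_int n)\<^sup>2) \<le> RM" unfolding RM_def by (rule real_sqrt_le_mono)
    moreover have "sqrt (1 + (real_of_int m)\<^sup>2 + (real_of_int n)\<^sup>2) > 0" by (simp add: add_pos_nonneg)
    ultimately show ?thesis using Cp_pos RM0 by (intro divide_left_mono) auto
  qed
  have S1: "(SUP s\<in>{0..M}. integral {0..s} (\<lambda>t. besselK (n + 1) s * besselI n t * t)) \<le> Cp * (M / RM)"
  proof (rule cSUP_least)
    show "{0..M} \<noteq> {}" using M0 by simp
    fix s assume "s \<in> {0..M}"
    thus "integral {0..s} (\<lambda>t. besselK (n + 1) s * besselI n t * t) \<le> Cp * (M / RM)"
      using I1_inner[of s M n] unfolding RM_def \<nu>_def by simp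
  qed
  have S2: "(SUP t\<in>{0..M}. integral {t..M} (\<lambda>s. besselK (n + 1) s * besselI n t * s)) \<le> 18 * Cp * (M / RM)"
  proof (rule cSUP_least)
    show "{0..M} \<noteq> {}" using M0 by simp
    fix t assume "t \<in> {0..M}"
    thus "integral {t..M} (\<lambda>s. besselK (n + 1) s * besselI n t * s) \<le> 18 * Cp * (M / RM)"
      using I2_inner[of t M n] unfolding RM_def \<nu>_def by simp
  qed
  have "calI1 m n \<le> (1/M) * (Cp * (M / RM))"
    unfolding calI1_def M_def[symmetric] using S1 M0 by (intro mult_left_mono) auto
  also have "\<dots> = Cp / RM" using M0 by simp
  also have "\<dots> \<le> 18 * Cp / RM" using Cp_pos RM0 by (intro divide_right_mono) auto
  finally have c1: "calI1 m n \<le> 18 * Cp / RM" .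
  have "calI2 m n \<le> (1/M) * (18 * Cp * (M / RM))"
    unfolding calI2_def M_def[symmetric] using S2 M0 by (intro mult_left_mono) auto
  also have "\<dots> = 18 * Cp / RM" using M0 by simp
  finally have c2: "calI2 m n \<le> 18 * Cp / RM" .
  show "calI1 m n \<le> 18 * Cp / sqrt (1 + (real_of_int m)\<^sup>2 + (real_of_int n)\<^sup>2) \<and>
        calI2 m n \<le> 18 * Cp / sqrt (1 + (real_of_int m)\<^sup>2 + (real_of_int n)\<^sup>2)"
    using c1 c2 Q by linarith
qed


end
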